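(* Let $p,r$ be distinct primes with $p\geq 3$, and let $G$ be a finite group with $G=O^{p'}(G)$ that acts faithfully and completely reducibly on an elementary abelian $r$-group $V$. Assume that $|G|_p=p^c\geq p^2$, that $O_p(G)$ is cyclic of order $p$ and acts fixed-point-freely on $V$, and that every nonidentity element of $V$ is fixed by a unique subgroup of $G$ of order $p^{c-1}$. Then $G$ acts primitively on $V$.
   Context: $O^{p'}(G)$ is the smallest normal subgroup of $G$ whose index is not divisible by $p$; $O_p(G)$ is the largest normal $p$-subgroup of $G$; $|G|_p$ is the $p$-part of $|G|$. A group $U$ acts fixed-point-freely on $V$ if $U\ltimes V$ is a Frobenius group with complement $U$ and kernel $V$ (i.e. each nonidentity element of $U$ fixes only the identity of $V$). An irreducible $G$-module $V$ is imprimitive if $V=V_1\oplus\cdots\oplus V_n$ for some $n\geq 2$ subspaces $V_i$ permuted transitively by $G$; $V$ is primitive if it is irreducible and not imprimitive. *)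

theory Defs
  imports "HOL-Algebra.Algebra" "HOL-Computational_Algebra.Primes"
begin

definition p_subgroup :: "('g, 'm) monoid_scheme \<Rightarrow> nat \<Rightarrow> 'g set \<Rightarrow> bool" where
  "p_subgroup G p H \<longleftrightarrow> subgroup H G \<and> finite H \<and> (\<exists>k. card H = p ^ k)"

definition O_p :: "('g, 'm) monoid_scheme \<Rightarrow> nat \<Rightarrow> 'g set" where
  "O_p G p = (THE N. p_subgroup G p N \<and> N \<lhd> G \<and>
                 (\<forall>M. p_subgroup G p M \<and> M \<lhd> G \<longrightarrow> M \<subseteq> N))"

definition O_p_prime_upper :: "('g, 'm) monoid_scheme \<Rightarrow> nat \<Rightarrow> 'g set" where
  "O_p_prime_upper G p =
     \<Inter>{N. N \<lhd> G \<and> \<not> p dvd card (rcosets\<^bsub>G\<^esub> N)}"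

definition elem_abelian :: "('v, 'n) monoid_scheme \<Rightarrow> nat \<Rightarrow> bool" where
  "elem_abelian V r \<longleftrightarrow> comm_group V \<and> finite (carrier V) \<and>
     (\<forall>v \<in> carrier V. v [^]\<^bsub>V\<^esub> r = \<one>\<^bsub>V\<^esub>)"

definition linear_action ::
  "('g, 'm) monoid_scheme \<Rightarrow> ('v, 'n) monoid_scheme \<Rightarrow> ('g \<Rightarrow> 'v \<Rightarrow> 'v) \<Rightarrow> bool" where
  "linear_action G V \<phi> \<longleftrightarrow> group_action G (carrier V) \<phi> \<and>
     (\<forall>g \<in> carrier G. \<phi> g \<in> hom V V)"

definition faithful_lin_action ::
  "('g, 'm) monoid_scheme \<Rightarrow> ('v, 'n) monoid_scheme \<Rightarrow> ('g \<Rightarrow> 'v \<Rightarrow> 'v) \<Rightarrow> bool" where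
  "faithful_lin_action G V \<phi> \<longleftrightarrow> linear_action G V \<phi> \<and> inj_on \<phi> (carrier G)"

text \<open>G-submodules (for elementary abelian V, subgroups are exactly the F_r-subspaces).\<close>
definition submodule ::
  "('g, 'm) monoid_scheme \<Rightarrow> ('v, 'n) monoid_scheme \<Rightarrow> ('g \<Rightarrow> 'v \<Rightarrow> 'v) \<Rightarrow> 'v set \<Rightarrow> bool" where
  "submodule G V \<phi> W \<longleftrightarrow> subgroup W V \<and> (\<forall>g \<in> carrier G. \<phi> g ` W \<subseteq> W)"

definition completely_reducible ::
  "('g, 'm) monoid_scheme \<Rightarrow> ('v, 'n) monoid_scheme \<Rightarrow> ('g \<Rightarrow> 'v \<Rightarrow> 'v) \<Rightarrow> bool" where
  "completely_reducible G V \<phi> \<longleftrightarrow>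
     (\<forall>W. submodule G V \<phi> W \<longrightarrow>
        (\<exists>U. submodule G V \<phi> U \<and> W \<inter> U = {\<one>\<^bsub>V\<^esub>} \<and> W <#>\<^bsub>V\<^esub> U = carrier V))"

definition irreducible_mod ::
  "('g, 'm) monoid_scheme \<Rightarrow> ('v, 'n) monoid_scheme \<Rightarrow> ('g \<Rightarrow> 'v \<Rightarrow> 'v) \<Rightarrow> bool" where
  "irreducible_mod G V \<phi> \<longleftrightarrow> carrier V \<noteq> {\<one>\<^bsub>V\<^esub>} \<and>
     (\<forall>W. submodule G V \<phi> W \<longrightarrow> W = {\<one>\<^bsub>V\<^esub>} \<or> W = carrier V)"

definition internal_direct_sum :: "('v, 'n) monoid_scheme \<Rightarrow> 'v set set \<Rightarrow> bool" where
  "internal_direct_sum V S \<longleftrightarrow> finite S \<and> (\<forall>W \<in> S. subgroup W V) \<and>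
     (\<forall>v \<in> carrier V. \<exists>!f. f \<in> (\<Pi>\<^sub>E W \<in> S. W) \<and> finprod V f S = v)"

definition imprimitive ::
  "('g, 'm) monoid_scheme \<Rightarrow> ('v, 'n) monoid_scheme \<Rightarrow> ('g \<Rightarrow> 'v \<Rightarrow> 'v) \<Rightarrow> bool" where
  "imprimitive G V \<phi> \<longleftrightarrow> irreducible_mod G V \<phi> \<and>
     (\<exists>S. internal_direct_sum V S \<and> card S \<ge> 2 \<and>
        (\<forall>g \<in> carrier G. \<forall>W \<in> S. \<phi> g ` W \<in> S) \<and>
        (\<forall>W1 \<in> S. \<forall>W2 \<in> S. \<exists>g \<in> carrier G. \<phi> g ` W1 = W2))"

definition primitive ::
  "('g, 'm) monoid_scheme \<Rightarrow> ('v, 'n) monoid_scheme \<Rightarrow> ('g \<Rightarrow> 'v \<Rightarrow> 'v) \<Rightarrow> bool" where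
  "primitive G V \<phi> \<longleftrightarrow> irreducible_mod G V \<phi> \<and> \<not> imprimitive G V \<phi>"

end

theory Submission
  imports Defs
begin

lemma (in comm_monoid) finprod_in_closed:
  assumes "finite A" "f \<in> A \<rightarrow> F" "F \<subseteq> carrier G" "\<one> \<in> F"
    "\<And>x y. x \<in> F \<Longrightarrow> y \<in> F \<Longrightarrow> x \<otimes> y \<in> F"
  shows "finprod G f A \<in> F"
  using assms(1,2)
proof (induction A rule: finite_induct)
  case empty
  then show ?case using assms by simp
next
  case (insert a A)
  then have "f \<in> A \<rightarrow> carrier G" "f a \<in> carrier G" using assms(3) by auto
  then have "finprod G f (insert a A) = f a \<otimes> finprod G f A"
    using insert by simp
  then show ?case using insert assms(5) by auto
qed

lemma (in group_action) image_comp: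
  assumes "A \<subseteq> E" "g1 \<in> carrier G" "g2 \<in> carrier G"
  shows "\<phi> (g1 \<otimes> g2) ` A = \<phi> g1 ` (\<phi> g2 ` A)"
proof -
  have "\<And>x. x \<in> A \<Longrightarrow> \<phi> (g1 \<otimes> g2) x = \<phi> g1 (\<phi> g2 x)"
    using composition_rule assms by blast
  then show ?thesis by (simp add: image_image cong: image_cong)
qed

lemma (in group_action) image_one:
  assumes "A \<subseteq> E"
  shows "\<phi> \<one> ` A = A"
proof -
  have "\<phi> \<one> = (\<lambda>x \<in> E. x)" using id_eq_one by simp
  then show ?thesis using assms by auto
qed

lemma (in group) pow_card_subgroup:
  assumes "subgroup H G" "h \<in> H"
  shows "h [^] card H = \<one>"
proof -
  interpret K: group "G\<lparr>carrier := H\<rparr>" using subgroup_imp_group assms(1) by blast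
  have "h [^]\<^bsub>G\<lparr>carrier := H\<rparr>\<^esub> order (G\<lparr>carrier := H\<rparr>) = \<one>\<^bsub>G\<lparr>carrier := H\<rparr>\<^esub>"
    using K.pow_order_eq_1 assms(2) by simp
  then show ?thesis using nat_pow_consistent[of h "card H" H] by (simp add: order_def)
qed

lemma (in comm_group) swap_eq:
  assumes "a \<otimes> b = c \<otimes> d" "a \<in> carrier G" "b \<in> carrier G" "c \<in> carrier G" "d \<in> carrier G"
  shows "a \<otimes> inv c = d \<otimes> inv b"
proof -
  have "a \<otimes> inv c = (a \<otimes> b) \<otimes> (inv b \<otimes> inv c)"
    using assms(2-4) by (metis inv_closed m_assoc m_closed r_inv r_one)
  also have "\<dots> = (c \<otimes> d) \<otimes> (inv b \<otimes> inv c)" using assms(1) by simp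
  also have "\<dots> = d \<otimes> (c \<otimes> (inv b \<otimes> inv c))"
    using assms(3-5) by (simp add: m_assoc m_lcomm[of c d])
  also have "\<dots> = d \<otimes> (inv b \<otimes> (c \<otimes> inv c))"
    using assms(3-5) by (simp add: m_lcomm[of c "inv b"])
  also have "\<dots> = d \<otimes> inv b" using assms(3-5) by (simp add: r_inv)
  finally show ?thesis .
qed

lemma (in group) eq_of_inv_one:
  assumes "x \<otimes> inv y = \<one>" "x \<in> carrier G" "y \<in> carrier G"
  shows "x = y"
  using inv_equality[of x "inv y"] assms by simp

theorem lemma2p3:
  fixes G :: "'g monoid" and V :: "'v monoid" and \<phi> :: "'g \<Rightarrow> 'v \<Rightarrow> 'v"
    and p r c :: nat
  assumes "Factorial_Ring.prime p" and "Factorial_Ring.prime r" and "p \<noteq> r" and "p \<ge> 3"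
    and "group G" and "finite (carrier G)"
    and "O_p_prime_upper G p = carrier G"
    and "elem_abelian V r"
    and "faithful_lin_action G V \<phi>"
    and "completely_reducible G V \<phi>"
    and "multiplicity p (order G) = c" and "c \<ge> 2"
    and "card (O_p G p) = p"
    and "\<exists>x \<in> carrier G. O_p G p = generate G {x}"
    and "\<forall>x \<in> O_p G p. x \<noteq> \<one>\<^bsub>G\<^esub> \<longrightarrow>
           (\<forall>v \<in> carrier V. \<phi> x v = v \<longrightarrow> v = \<one>\<^bsub>V\<^esub>)"
    and "\<forall>v \<in> carrier V. v \<noteq> \<one>\<^bsub>V\<^esub> \<longrightarrow>
           (\<exists>!H. subgroup H G \<and> card H = p ^ (c - 1) \<and> (\<forall>h \<in> H. \<phi> h v = v))"
  shows "primitive G V \<phi>"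
proof -
  interpret grp: group G by fact
  have VGc: "comm_group V" using assms(8) unfolding elem_abelian_def by blast
  interpret VG: comm_group V by (rule VGc)
  have la: "linear_action G V \<phi>" and inj: "inj_on \<phi> (carrier G)"
    using assms(9) unfolding faithful_lin_action_def by auto
  have ga: "group_action G (carrier V) \<phi>" using la unfolding linear_action_def by blast
  interpret act: group_action G "carrier V" \<phi> by (rule ga)
  have homs: "group_hom V V (\<phi> g)" if g: "g \<in> carrier G" for g
  proof -
    have "\<phi> g \<in> hom V V" using la g unfolding linear_action_def by blast
    then show ?thesis by (simp add: group_hom_def group_hom_axioms_def VG.is_group)
  qed
  have fix1: "\<phi> g \<one>\<^bsub>V\<^esub> = \<one>\<^bsub>V\<^esub>" if "g \<in> carrier G" for g
    using group_hom.hom_one[OF homs[OF that]] .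
  have fixm: "\<phi> g (a \<otimes>\<^bsub>V\<^esub> b) = \<phi> g a \<otimes>\<^bsub>V\<^esub> \<phi> g b"
    if "g \<in> carrier G" "a \<in> carrier V" "b \<in> carrier V" for g a b
    using group_hom.hom_mult[OF homs[OF that(1)] that(2,3)] .
  have phiV: "\<And>g a. g \<in> carrier G \<Longrightarrow> a \<in> carrier V \<Longrightarrow> \<phi> g a \<in> carrier V"
    using act.element_image by blast
  have L1: "g = \<one>\<^bsub>G\<^esub>" if g: "g \<in> carrier G" and fx: "\<forall>v\<in>carrier V. \<phi> g v = v" for g
  proof -
    have "\<phi> g \<in> extensional (carrier V)"
      using act.bij_prop0[OF g] Bij_imp_extensional by blast
    then have "\<phi> g = (\<lambda>x \<in> carrier V. x)"
      using fx by (auto simp: extensional_def)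
    then have "\<phi> g = \<phi> \<one>\<^bsub>G\<^esub>" using act.id_eq_one by simp
    then show ?thesis using inj g by (meson grp.one_closed inj_on_eq_iff)
  qed
  have "p ^ 1 \<le> p ^ (c - 1)" by (rule power_increasing) (use assms(4,12) in auto)
  then have pge: "p ^ (c - 1) \<ge> p" by simp
  have Hsmall: False if K: "subgroup K G" "card K = p ^ (c - 1)"
     and fx: "\<forall>h\<in>K. \<forall>v\<in>carrier V. \<phi> h v = v" for K
  proof -
    have "K \<subseteq> {\<one>\<^bsub>G\<^esub>}" using L1 fx K(1) subgroup.subset by blast
    then have "card K \<le> card {\<one>\<^bsub>G\<^esub>}" by (intro card_mono) auto
    then have "card K \<le> 1" by simp
    then show False using K(2) pge assms(4) by linarith
  qed
  define Q where "Q v = (THE H. subgroup H G \<and> card H = p ^ (c - 1) \<and> (\<forall>h \<in> H. \<phi> h v = v))" for v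
  have Qp: "subgroup (Q v) G \<and> card (Q v) = p ^ (c - 1) \<and> (\<forall>h \<in> Q v. \<phi> h v = v)"
    if "v \<in> carrier V" "v \<noteq> \<one>\<^bsub>V\<^esub>" for v
    unfolding Q_def using theI'[OF assms(16)[rule_format, OF that]] .
  have Qu: "K = Q v" if "v \<in> carrier V" "v \<noteq> \<one>\<^bsub>V\<^esub>" "subgroup K G" "card K = p ^ (c - 1)"
      "\<forall>h \<in> K. \<phi> h v = v" for v K
    unfolding Q_def using the1_equality[OF assms(16)[rule_format, OF that(1,2)]] that by blast
  have Vnt: "carrier V \<noteq> {\<one>\<^bsub>V\<^esub>}"
  proof
    assume cv: "carrier V = {\<one>\<^bsub>V\<^esub>}"
    have "carrier G = {\<one>\<^bsub>G\<^esub>}" using L1 fix1 cv by auto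
    then have "order G = 1" by (simp add: order_def)
    then show False using assms(11,12) by simp
  qed
  have irr: "irreducible_mod G V \<phi>"
  proof -
    have False if W: "submodule G V \<phi> W" "W \<noteq> {\<one>\<^bsub>V\<^esub>}" "W \<noteq> carrier V" for W
    proof -
      obtain U where U: "submodule G V \<phi> U" "W \<inter> U = {\<one>\<^bsub>V\<^esub>}" "W <#>\<^bsub>V\<^esub> U = carrier V"
        using assms(10) W(1) unfolding completely_reducible_def by blast
      have Wsg: "subgroup W V" and Wi: "\<And>g. g \<in> carrier G \<Longrightarrow> \<phi> g ` W \<subseteq> W"
        using W(1) unfolding submodule_def by auto
      have Usg: "subgroup U V" and Ui: "\<And>g. g \<in> carrier G \<Longrightarrow> \<phi> g ` U \<subseteq> U"
        using U(1) unfolding submodule_def by auto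
      have WV: "W \<subseteq> carrier V" using Wsg subgroup.subset by blast
      have UV: "U \<subseteq> carrier V" using Usg subgroup.subset by blast
      have "U \<noteq> {\<one>\<^bsub>V\<^esub>}"
      proof
        assume "U = {\<one>\<^bsub>V\<^esub>}"
        then have "W <#>\<^bsub>V\<^esub> U = W" using WV by (force simp: set_mult_def)
        then show False using U(3) W(3) by simp
      qed
      then obtain u0 where u0: "u0 \<in> U" "u0 \<noteq> \<one>\<^bsub>V\<^esub>"
        using subgroup.one_closed[OF Usg] by blast
      obtain w0 where w0: "w0 \<in> W" "w0 \<noteq> \<one>\<^bsub>V\<^esub>"
        using subgroup.one_closed[OF Wsg] W(2) by blast
      have key: "Q w = Q u" if w: "w \<in> W" "w \<noteq> \<one>\<^bsub>V\<^esub>" and u: "u \<in> U" "u \<noteq> \<one>\<^bsub>V\<^esub>" for w u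
      proof -
        have wV: "w \<in> carrier V" and uV: "u \<in> carrier V" using w u WV UV by auto
        define v where "v = w \<otimes>\<^bsub>V\<^esub> u"
        have vV: "v \<in> carrier V" using wV uV v_def by simp
        have vn: "v \<noteq> \<one>\<^bsub>V\<^esub>"
        proof
          assume "v = \<one>\<^bsub>V\<^esub>"
          then have "inv\<^bsub>V\<^esub> u = w" using VG.inv_equality[of w u] wV uV v_def by simp
          then have "w \<in> U" using subgroup.m_inv_closed[OF Usg u(1)] by simp
          then show False using U(2) w by blast
        qed
        have fx: "\<phi> h w = w \<and> \<phi> h u = u" if h: "h \<in> Q v" for h
        proof -
          have hG: "h \<in> carrier G" using Qp[OF vV vn] h subgroup.subset by blast
          have "\<phi> h v = v" using Qp[OF vV vn] h by blast
          then have eq: "\<phi> h w \<otimes>\<^bsub>V\<^esub> \<phi> h u = w \<otimes>\<^bsub>V\<^esub> u" using fixm[OF hG wV uV] v_def by simp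
          have aW: "\<phi> h w \<in> W" using Wi[OF hG] w by blast
          have bU: "\<phi> h u \<in> U" using Ui[OF hG] u by blast
          have aV: "\<phi> h w \<in> carrier V" and bV: "\<phi> h u \<in> carrier V" using aW bU WV UV by auto
          have e2: "\<phi> h w \<otimes>\<^bsub>V\<^esub> inv\<^bsub>V\<^esub> w = u \<otimes>\<^bsub>V\<^esub> inv\<^bsub>V\<^esub> (\<phi> h u)"
            using VG.swap_eq[OF eq aV bV wV uV] .
          have "\<phi> h w \<otimes>\<^bsub>V\<^esub> inv\<^bsub>V\<^esub> w \<in> W"
            using aW w(1) Wsg by (simp add: subgroup.m_closed subgroup.m_inv_closed)
          moreover have "u \<otimes>\<^bsub>V\<^esub> inv\<^bsub>V\<^esub> (\<phi> h u) \<in> U"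
            using bU u(1) Usg by (simp add: subgroup.m_closed subgroup.m_inv_closed)
          ultimately have "\<phi> h w \<otimes>\<^bsub>V\<^esub> inv\<^bsub>V\<^esub> w = \<one>\<^bsub>V\<^esub>"
            and "u \<otimes>\<^bsub>V\<^esub> inv\<^bsub>V\<^esub> (\<phi> h u) = \<one>\<^bsub>V\<^esub>"
            using e2 U(2) by auto
          then show ?thesis using VG.eq_of_inv_one aV bV wV uV by metis
        qed
        have "Q v = Q w" using Qu[OF wV w(2)] Qp[OF vV vn] fx by blast
        moreover have "Q v = Q u" using Qu[OF uV u(2)] Qp[OF vV vn] fx by blast
        ultimately show ?thesis by simp
      qed
      have u0V: "u0 \<in> carrier V" using u0 UV by auto
      have allfix: "\<phi> h x = x" if h: "h \<in> Q u0" and x: "x \<in> carrier V" for h x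
      proof -
        have hG: "h \<in> carrier G" using Qp[OF u0V u0(2)] h subgroup.subset by blast
        have fW: "\<phi> h w = w" if "w \<in> W" for w
        proof (cases "w = \<one>\<^bsub>V\<^esub>")
          case True then show ?thesis using fix1[OF hG] by simp
        next
          case False
          then have "Q w = Q u0" using key that u0 by blast
          then show ?thesis using Qp[of w] that WV False h by auto
        qed
        have fU: "\<phi> h u = u" if "u \<in> U" for u
        proof (cases "u = \<one>\<^bsub>V\<^esub>")
          case True then show ?thesis using fix1[OF hG] by simp
        next
          case False
          then have "Q u = Q u0" using key[OF w0 that False] key[OF w0 u0] by simp
          then show ?thesis using Qp[of u] that UV False h by auto
        qed
        obtain w u where wu: "w \<in> W" "u \<in> U" "x = w \<otimes>\<^bsub>V\<^esub> u"
          using x U(3) unfolding set_mult_def by blast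
        then show ?thesis using fixm[OF hG, of w u] fW fU WV UV by auto
      qed
      show False using Hsmall[of "Q u0"] Qp[OF u0V u0(2)] allfix by blast
    qed
    then show ?thesis using Vnt unfolding irreducible_mod_def by blast
  qed
  have nimp: False if imp: "imprimitive G V \<phi>"
  proof -
    obtain S where S: "internal_direct_sum V S" "card S \<ge> 2"
      and perm: "\<forall>g \<in> carrier G. \<forall>W \<in> S. \<phi> g ` W \<in> S"
      and tr: "\<forall>W1 \<in> S. \<forall>W2 \<in> S. \<exists>g \<in> carrier G. \<phi> g ` W1 = W2"
      using imp unfolding imprimitive_def by blast
    have finS: "finite S" and Ssg: "\<And>W. W \<in> S \<Longrightarrow> subgroup W V"
      and dec: "\<forall>v \<in> carrier V. \<exists>!f. f \<in> (\<Pi>\<^sub>E W \<in> S. W) \<and> finprod V f S = v"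
      using S(1) unfolding internal_direct_sum_def by auto
    have SV: "\<And>W. W \<in> S \<Longrightarrow> W \<subseteq> carrier V" using Ssg subgroup.subset by blast
    obtain W1 W2 where W12: "W1 \<in> S" "W2 \<in> S" "W1 \<noteq> W2"
    proof -
      have "\<not> card S \<le> Suc 0" using S(2) by simp
      then show ?thesis using card_le_Suc0_iff_eq[OF finS] that by blast
    qed
    have nontriv: "W \<noteq> {\<one>\<^bsub>V\<^esub>}" if "W \<in> S" for W
    proof
      assume W1: "W = {\<one>\<^bsub>V\<^esub>}"
      have "Xs = {\<one>\<^bsub>V\<^esub>}" if "Xs \<in> S" for Xs
      proof -
        obtain g where "g \<in> carrier G" "\<phi> g ` W = Xs" using tr \<open>W \<in> S\<close> \<open>Xs \<in> S\<close> by blast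
        then show ?thesis using W1 fix1 by auto
      qed
      then show False using W12 by blast
    qed
    define pf where "pf Xs Ys x y = (\<lambda>W\<in>S. if W = Xs then x else if W = Ys then y else \<one>\<^bsub>V\<^esub>)"
      for Xs Ys x y
    have pfin: "pf Xs Ys x y \<in> (\<Pi>\<^sub>E W \<in> S. W)" if "Xs \<in> S" "Ys \<in> S" "x \<in> Xs" "y \<in> Ys" for Xs Ys x y
      using that Ssg subgroup.one_closed unfolding pf_def by fastforce
    have pfprod: "finprod V (pf Xs Ys x y) S = x \<otimes>\<^bsub>V\<^esub> y"
      if XY: "Xs \<in> S" "Ys \<in> S" "Xs \<noteq> Ys" "x \<in> Xs" "y \<in> Ys" for Xs Ys x y
    proof -
      define R where "R = S - {Xs, Ys}"
      have SR: "S = insert Xs (insert Ys R)" using XY R_def by auto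
      have finR: "finite R" using finS R_def by simp
      have xV: "x \<in> carrier V" and yV: "y \<in> carrier V" using XY SV by auto
      have fc: "pf Xs Ys x y \<in> A \<rightarrow> carrier V" if "A \<subseteq> S" for A
        by (intro Pi_I) (use that xV yV in \<open>simp add: pf_def subsetD\<close>)
      have "finprod V (pf Xs Ys x y) S = pf Xs Ys x y Xs \<otimes>\<^bsub>V\<^esub> (pf Xs Ys x y Ys \<otimes>\<^bsub>V\<^esub> finprod V (pf Xs Ys x y) R)"
        unfolding SR using finR XY R_def fc[of R] fc[of "insert Ys R"] fc[of "{Xs}"] fc[of "{Ys}"]
        by (simp add: VG.finprod_insert)
      also have "finprod V (pf Xs Ys x y) R = \<one>\<^bsub>V\<^esub>"
        by (rule VG.finprod_one_eqI) (auto simp: pf_def R_def)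
      finally have "finprod V (pf Xs Ys x y) S = pf Xs Ys x y Xs \<otimes>\<^bsub>V\<^esub> (pf Xs Ys x y Ys \<otimes>\<^bsub>V\<^esub> \<one>\<^bsub>V\<^esub>)" .
      moreover have "pf Xs Ys x y Xs = x" "pf Xs Ys x y Ys = y" using XY unfolding pf_def by auto
      ultimately show ?thesis using yV by simp
    qed
    have uniq: "pf Xs Ys x y = pf A B a b"
      if "Xs \<in> S" "Ys \<in> S" "Xs \<noteq> Ys" "x \<in> Xs" "y \<in> Ys" "A \<in> S" "B \<in> S" "A \<noteq> B" "a \<in> A" "b \<in> B"
        "x \<otimes>\<^bsub>V\<^esub> y = a \<otimes>\<^bsub>V\<^esub> b" for Xs Ys x y A B a b
    proof -
      have "x \<otimes>\<^bsub>V\<^esub> y \<in> carrier V" using that SV by auto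
      then have "\<exists>!f. f \<in> (\<Pi>\<^sub>E W \<in> S. W) \<and> finprod V f S = x \<otimes>\<^bsub>V\<^esub> y" using dec by blast
      moreover have "pf Xs Ys x y \<in> (\<Pi>\<^sub>E W \<in> S. W) \<and> finprod V (pf Xs Ys x y) S = x \<otimes>\<^bsub>V\<^esub> y"
        using pfin[OF that(1,2,4,5)] pfprod[OF that(1-5)] by simp
      moreover have "pf A B a b \<in> (\<Pi>\<^sub>E W \<in> S. W) \<and> finprod V (pf A B a b) S = x \<otimes>\<^bsub>V\<^esub> y"
        using pfin[OF that(6,7,9,10)] pfprod[OF that(6-10)] that(11) by simp
      ultimately show ?thesis by blast
    qed
    have oddN: "odd (p ^ (c - 1))"
      using prime_odd_nat[OF assms(1)] assms(4) by simp
    have key2: "Q x = Q y" if XY: "Xs \<in> S" "Ys \<in> S" "Xs \<noteq> Ys" and x: "x \<in> Xs" "x \<noteq> \<one>\<^bsub>V\<^esub>"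
      and y: "y \<in> Ys" "y \<noteq> \<one>\<^bsub>V\<^esub>" for Xs Ys x y
    proof -
      have xV: "x \<in> carrier V" and yV: "y \<in> carrier V" using XY x y SV by auto
      define v where "v = x \<otimes>\<^bsub>V\<^esub> y"
      have vV: "v \<in> carrier V" using xV yV v_def by simp
      have vn: "v \<noteq> \<one>\<^bsub>V\<^esub>"
      proof
        assume "v = \<one>\<^bsub>V\<^esub>"
        then have "x \<otimes>\<^bsub>V\<^esub> y = \<one>\<^bsub>V\<^esub> \<otimes>\<^bsub>V\<^esub> \<one>\<^bsub>V\<^esub>" using v_def by simp
        moreover have o1: "\<one>\<^bsub>V\<^esub> \<in> Xs" "\<one>\<^bsub>V\<^esub> \<in> Ys"
          using XY Ssg subgroup.one_closed by auto
        ultimately have "pf Xs Ys x y = pf Xs Ys \<one>\<^bsub>V\<^esub> \<one>\<^bsub>V\<^esub>"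
          using uniq[OF XY x(1) y(1) XY o1] by simp
        then have "pf Xs Ys x y Xs = pf Xs Ys \<one>\<^bsub>V\<^esub> \<one>\<^bsub>V\<^esub> Xs" by simp
        then show False using x XY unfolding pf_def by simp
      qed
      have fx: "\<phi> h x = x \<and> \<phi> h y = y" if h: "h \<in> Q v" for h
      proof -
        have hG: "h \<in> carrier G" using Qp[OF vV vn] h subgroup.subset by blast
        have "\<phi> h v = v" using Qp[OF vV vn] h by blast
        then have eq: "x \<otimes>\<^bsub>V\<^esub> y = \<phi> h x \<otimes>\<^bsub>V\<^esub> \<phi> h y" using fixm[OF hG xV yV] v_def by simp
        define A where "A = \<phi> h ` Xs"
        define B where "B = \<phi> h ` Ys"
        have AB: "A \<in> S" "B \<in> S" using perm hG XY A_def B_def by auto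
        have AneB: "A \<noteq> B"
          using inj_on_image_eq_iff[OF act.inj_prop[OF hG] SV[OF XY(1)] SV[OF XY(2)]] XY(3)
            A_def B_def by simp
        have ab: "\<phi> h x \<in> A" "\<phi> h y \<in> B" using x y A_def B_def by auto
        have E: "pf Xs Ys x y = pf A B (\<phi> h x) (\<phi> h y)"
          using uniq[OF XY x(1) y(1) AB AneB ab eq] .
        have ex: "x = (if Xs = A then \<phi> h x else if Xs = B then \<phi> h y else \<one>\<^bsub>V\<^esub>)"
          using fun_cong[OF E, of Xs] XY unfolding pf_def by simp
        have ey: "y = (if Ys = A then \<phi> h x else if Ys = B then \<phi> h y else \<one>\<^bsub>V\<^esub>)"
          using fun_cong[OF E, of Ys] XY unfolding pf_def by simp
        show ?thesis
        proof (cases "Xs = A")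
          case True
          then have "Ys = B" using ey XY(3) y(2) by (auto split: if_splits)
          then show ?thesis using True ex ey XY(3) by simp
        next
          case False
          then have XB: "Xs = B" using ex x(2) by (auto split: if_splits)
          then have YA: "Ys = A" using ey XY(3) y(2) by (auto split: if_splits)
          have par: "\<phi> (h [^]\<^bsub>G\<^esub> k) ` Xs = (if even k then Xs else Ys) \<and>
                     \<phi> (h [^]\<^bsub>G\<^esub> k) ` Ys = (if even k then Ys else Xs)" for k :: nat
          proof (induction k)
            case 0
            then show ?case using act.image_one SV XY by simp
          next
            case (Suc k)
            have hk: "h [^]\<^bsub>G\<^esub> k \<in> carrier G" using hG by simp
            have "\<phi> (h [^]\<^bsub>G\<^esub> Suc k) ` Xs = \<phi> h ` (\<phi> (h [^]\<^bsub>G\<^esub> k) ` Xs)"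
              using grp.nat_pow_Suc2[OF hG] act.image_comp[OF SV[OF XY(1)] hG hk] by simp
            moreover have "\<phi> (h [^]\<^bsub>G\<^esub> Suc k) ` Ys = \<phi> h ` (\<phi> (h [^]\<^bsub>G\<^esub> k) ` Ys)"
              using grp.nat_pow_Suc2[OF hG] act.image_comp[OF SV[OF XY(2)] hG hk] by simp
            moreover have hX: "\<phi> h ` Xs = Ys" and hY: "\<phi> h ` Ys = Xs"
              using XB YA A_def B_def by simp_all
            ultimately show ?case using Suc.IH by (cases "even k") simp_all
          qed
          have "h [^]\<^bsub>G\<^esub> card (Q v) = \<one>\<^bsub>G\<^esub>"
            using grp.pow_card_subgroup Qp[OF vV vn] h by blast
          moreover obtain N where N: "N = p ^ (c - 1)" by blast
          ultimately have hN: "h [^]\<^bsub>G\<^esub> N = \<one>\<^bsub>G\<^esub>" using Qp[OF vV vn] by simp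
          have oN: "odd N" using oddN N by simp
          have "\<phi> (h [^]\<^bsub>G\<^esub> N) ` Xs = (if even N then Xs else Ys)" using par by blast
          then have "\<phi> \<one>\<^bsub>G\<^esub> ` Xs = Ys" using oN hN by simp
          then show ?thesis using act.image_one SV XY by simp
        qed
      qed
      have "Q v = Q x" using Qu[OF xV x(2)] Qp[OF vV vn] fx by blast
      moreover have "Q v = Q y" using Qu[OF yV y(2)] Qp[OF vV vn] fx by blast
      ultimately show ?thesis by simp
    qed
    obtain w1 where w1: "w1 \<in> W1" "w1 \<noteq> \<one>\<^bsub>V\<^esub>"
      using subgroup.one_closed[OF Ssg[OF W12(1)]] nontriv[OF W12(1)] by blast
    obtain w2 where w2: "w2 \<in> W2" "w2 \<noteq> \<one>\<^bsub>V\<^esub>"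
      using subgroup.one_closed[OF Ssg[OF W12(2)]] nontriv[OF W12(2)] by blast
    have w1V: "w1 \<in> carrier V" using w1 SV W12 by auto
    have hG0: "h \<in> carrier G" if "h \<in> Q w1" for h
      using Qp[OF w1V w1(2)] that subgroup.subset by blast
    have fixS: "\<phi> h w = w" if h: "h \<in> Q w1" and W: "W \<in> S" "w \<in> W" for h W w
    proof (cases "w = \<one>\<^bsub>V\<^esub>")
      case True then show ?thesis using fix1[OF hG0[OF h]] by simp
    next
      case False
      have "Q w = Q w1"
      proof (cases "W = W1")
        case True
        then have "Q w = Q w2" using key2[OF W12 _ False w2] W by simp
        also have "\<dots> = Q w1" using key2[OF W12 w1 w2] by simp
        finally show ?thesis .
      next
        case ne: False
        show ?thesis using key2[OF W12(1) W(1) _ w1 W(2) False] ne by simp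
      qed
      then show ?thesis using Qp[of w] W SV False h by auto
    qed
    have allfix: "\<phi> h x = x" if h: "h \<in> Q w1" and x: "x \<in> carrier V" for h x
    proof -
      have hG: "h \<in> carrier G" using hG0 h .
      obtain f where f: "f \<in> (\<Pi>\<^sub>E W \<in> S. W)" "finprod V f S = x" using dec x by blast
      define F where "F = {y \<in> carrier V. \<phi> h y = y}"
      have "f \<in> S \<rightarrow> F" using f(1) fixS[OF h] SV unfolding F_def by (auto simp: PiE_def Pi_def) blast
      moreover have "F \<subseteq> carrier V" "\<one>\<^bsub>V\<^esub> \<in> F" using fix1[OF hG] unfolding F_def by auto
      moreover have "\<And>a b. a \<in> F \<Longrightarrow> b \<in> F \<Longrightarrow> a \<otimes>\<^bsub>V\<^esub> b \<in> F"
        using fixm[OF hG] unfolding F_def by auto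
      ultimately have "finprod V f S \<in> F" using VG.finprod_in_closed[OF finS] by blast
      then show ?thesis using f(2) unfolding F_def by simp
    qed
    show False using Hsmall[of "Q w1"] Qp[OF w1V w1(2)] allfix by blast
  qed
  show ?thesis unfolding primitive_def using irr nimp by blast
qed

end
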